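(* Let $k$ be a field with $1/2\in k$, let $A=k[[x_1,\dots,x_d]]$ and $B=A[[x_0]]$, with maximal ideal $\mathfrak m_B$. Let $F=x_0^2+x_1^2+\cdots+x_d^2+G$ with $G\in\mathfrak m_B^3$. Then there exist a unit $v_0\in B$, an element $a_0\in(x_1,\dots,x_d)B$ and an element $G_1\in(x_1,\dots,x_d)^3B$ such that $$F=v_0(x_0+a_0)^2+x_1^2+\cdots+x_d^2+G_1.$$ *)

theory Defs
  imports Main "HOL-Library.Poly_Mapping"
begin

text \<open>Formal power series over a field k in the variables x_0, x_1, ...,
  represented as coefficient functions on exponent vectors (monomials)
  of type nat =>0 nat.  The ring B = k[[x_0,...,x_d]] consists of those
  series whose coefficients vanish on monomials involving a variable x_i with i > d.\<close>

type_synonym 'a pser = "(nat \<Rightarrow>\<^sub>0 nat) \<Rightarrow> 'a"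

definition ps_in :: "nat \<Rightarrow> 'a::zero pser \<Rightarrow> bool" where
  "ps_in d f \<longleftrightarrow> (\<forall>m. f m \<noteq> 0 \<longrightarrow> Poly_Mapping.keys m \<subseteq> {0..d})"

definition ps_add :: "'a::plus pser \<Rightarrow> 'a pser \<Rightarrow> 'a pser" where
  "ps_add f g = (\<lambda>m. f m + g m)"

definition ps_sum :: "('i \<Rightarrow> 'a::comm_monoid_add pser) \<Rightarrow> 'i set \<Rightarrow> 'a pser" where
  "ps_sum f I = (\<lambda>m. \<Sum>i\<in>I. f i m)"

text \<open>Cauchy product; the index set is finite for every m.\<close>
definition ps_mult :: "'a::comm_semiring_1 pser \<Rightarrow> 'a pser \<Rightarrow> 'a pser" where
  "ps_mult f g = (\<lambda>m. \<Sum>p\<in>{p. fst p + snd p = m}. f (fst p) * g (snd p))"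

definition ps_monom :: "(nat \<Rightarrow>\<^sub>0 nat) \<Rightarrow> 'a::{zero,one} pser" where
  "ps_monom \<mu> = (\<lambda>m. if m = \<mu> then 1 else 0)"

definition ps_one :: "'a::{zero,one} pser" where
  "ps_one = ps_monom 0"

definition ps_var :: "nat \<Rightarrow> 'a::{zero,one} pser" where
  "ps_var i = ps_monom (Poly_Mapping.single i 1)"

definition ps_unit :: "nat \<Rightarrow> 'a::comm_semiring_1 pser \<Rightarrow> bool" where
  "ps_unit d f \<longleftrightarrow> (\<exists>g. ps_in d g \<and> ps_mult f g = ps_one)"

definition mdeg :: "(nat \<Rightarrow>\<^sub>0 nat) \<Rightarrow> nat" where
  "mdeg \<mu> = (\<Sum>i\<in>Poly_Mapping.keys \<mu>. Poly_Mapping.lookup \<mu> i)"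

text \<open>Membership in the ideal (x_i : i \<in> S)^n B of B = k[[x_0..x_d]]:
  f is a B-linear combination of the monomials of degree n in the variables x_i, i \<in> S
  (these generate the n-th power of the ideal).\<close>
definition ps_in_ideal_pow :: "nat \<Rightarrow> nat set \<Rightarrow> nat \<Rightarrow> 'a::comm_semiring_1 pser \<Rightarrow> bool" where
  "ps_in_ideal_pow d S n f \<longleftrightarrow>
     (\<exists>h. (\<forall>\<mu>. ps_in d (h \<mu>)) \<and>
          f = ps_sum (\<lambda>\<mu>. ps_mult (ps_monom \<mu>) (h \<mu>)) {\<mu>. Poly_Mapping.keys \<mu> \<subseteq> S \<and> mdeg \<mu> = n})"

end

theory Submission
  imports Defs "HOL-Computational_Algebra.Formal_Power_Series"
begin


abbreviation (input) lk :: "(nat \<Rightarrow>\<^sub>0 nat) \<Rightarrow> nat \<Rightarrow> nat" where "lk \<equiv> Poly_Mapping.lookup"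
abbreviation (input) ks :: "(nat \<Rightarrow>\<^sub>0 nat) \<Rightarrow> nat set" where "ks \<equiv> Poly_Mapping.keys"
abbreviation (input) sng :: "nat \<Rightarrow> nat \<Rightarrow> (nat \<Rightarrow>\<^sub>0 nat)" where "sng \<equiv> Poly_Mapping.single"

lemma finite_divisors: "finite {a::nat \<Rightarrow>\<^sub>0 nat. \<exists>b. a + b = m}"
proof -
  let ?D = "{a::nat \<Rightarrow>\<^sub>0 nat. \<exists>b. a + b = m}"
  have "inj_on (\<lambda>a. restrict (lk a) (ks m)) ?D"
  proof (rule inj_onI)
    fix a a' assume a: "a \<in> ?D" and a': "a' \<in> ?D"
      and eq: "restrict (lk a) (ks m) = restrict (lk a') (ks m)"
    show "a = a'"
    proof (rule poly_mapping_eqI)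
      fix i
      show "lk a i = lk a' i"
      proof (cases "i \<in> ks m")
        case True
        from eq have "restrict (lk a) (ks m) i = restrict (lk a') (ks m) i" by simp
        with True show ?thesis by simp
      next
        case False
        from a obtain b where ab: "a + b = m" by auto
        from a' obtain b' where ab': "a' + b' = m" by auto
        have m0: "lk m i = 0" using False by (simp add: in_keys_iff)
        have "lk m i = lk a i + lk b i" "lk m i = lk a' i + lk b' i"
          using ab ab' by (auto simp flip: lookup_add)
        with m0 show ?thesis by simp
      qed
    qed
  qed
  moreover have "(\<lambda>a. restrict (lk a) (ks m)) ` ?D \<subseteq> PiE (ks m) (\<lambda>i. {..lk m i})"
  proof
    fix x assume "x \<in> (\<lambda>a. restrict (lk a) (ks m)) ` ?D"
    then obtain a b where x: "x = restrict (lk a) (ks m)" and ab: "a + b = m" by auto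
    have "\<And>i. lk a i \<le> lk m i" using ab by (auto simp: lookup_add)
    then show "x \<in> PiE (ks m) (\<lambda>i. {..lk m i})" using x by auto
  qed
  moreover have "finite (PiE (ks m) (\<lambda>i. {..lk m i}))" by (rule finite_PiE) auto
  ultimately show ?thesis by (meson finite_imageD finite_subset)
qed

lemma finite_pairs: "finite {p::(nat \<Rightarrow>\<^sub>0 nat) \<times> (nat \<Rightarrow>\<^sub>0 nat). fst p + snd p = m}"
proof -
  have "{p::(nat \<Rightarrow>\<^sub>0 nat) \<times> (nat \<Rightarrow>\<^sub>0 nat). fst p + snd p = m}
     \<subseteq> {a. \<exists>b. a + b = m} \<times> {a. \<exists>b. a + b = m}"
    using add.commute by fastforce
  then show ?thesis using finite_divisors by (meson finite_SigmaI finite_subset)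
qed

lemma ps_mult_assoc: "ps_mult (ps_mult f g) h = ps_mult f (ps_mult (g::'a::comm_semiring_1 pser) h)"
proof
  fix m
  let ?P = "\<lambda>m. {p::(nat \<Rightarrow>\<^sub>0 nat) \<times> (nat \<Rightarrow>\<^sub>0 nat). fst p + snd p = m}"
  have "ps_mult (ps_mult f g) h m = (\<Sum>p\<in>?P m. \<Sum>q\<in>?P (fst p). f (fst q) * g (snd q) * h (snd p))"
    by (simp add: ps_mult_def sum_distrib_right)
  also have "\<dots> = (\<Sum>(p,q)\<in>Sigma (?P m) (\<lambda>p. ?P (fst p)). f (fst q) * g (snd q) * h (snd p))"
    by (rule sum.Sigma) (simp_all add: finite_pairs)
  also have "\<dots> = (\<Sum>(p,q)\<in>Sigma (?P m) (\<lambda>p. ?P (snd p)). f (fst p) * (g (fst q) * h (snd q)))"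
    by (rule sum.reindex_bij_witness[where j = "\<lambda>((x,c),(a,b)). ((a, b+c), (b,c))"
         and i = "\<lambda>((a,y),(b,c)). ((a+b, c), (a,b))"]) (auto simp: mult.assoc, simp_all add: add.assoc)
  also have "\<dots> = (\<Sum>p\<in>?P m. \<Sum>q\<in>?P (snd p). f (fst p) * (g (fst q) * h (snd q)))"
    by (rule sum.Sigma[symmetric]) (simp_all add: finite_pairs)
  also have "\<dots> = ps_mult f (ps_mult g h) m"
    by (simp add: ps_mult_def sum_distrib_left)
  finally show "ps_mult (ps_mult f g) h m = ps_mult f (ps_mult g h) m" .
qed

lemma ps_mult_comm: "ps_mult f g = ps_mult (g::'a::comm_semiring_1 pser) f"
proof
  fix m
  show "ps_mult f g m = ps_mult g f m"
    unfolding ps_mult_def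
    by (rule sum.reindex_bij_witness[where j = "\<lambda>(a,b). (b,a)" and i = "\<lambda>(a,b). (b,a)"])
       (auto simp: add.commute mult.commute)
qed

lemma ps_mult_one: "ps_mult ps_one f = (f::'a::comm_semiring_1 pser)"
proof
  fix m
  have "ps_mult ps_one f m = (\<Sum>p\<in>{p. fst p + snd p = m}. if p = (0, m) then f m else 0)"
    unfolding ps_mult_def ps_one_def ps_monom_def
    by (rule sum.cong) auto
  also have "\<dots> = f m" by (simp add: finite_pairs)
  finally show "ps_mult ps_one f m = f m" .
qed

lemma ps_mult_distrib: "ps_mult (\<lambda>m. f m + g m) h = (\<lambda>m. ps_mult f h m + ps_mult (g::'a::comm_semiring_1 pser) h m)"
  by (auto simp: ps_mult_def distrib_right sum.distrib)


lemma ps_mult_zero: "ps_mult (\<lambda>_. 0) f = (\<lambda>_. (0::'a::comm_semiring_1))"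
  by (auto simp: ps_mult_def)

typedef 'a mps = "UNIV :: ((nat \<Rightarrow>\<^sub>0 nat) \<Rightarrow> 'a) set" morphisms cf mk by auto

lemma cf_mk [simp]: "cf (mk f) = f"
  by (simp add: mk_inverse)

lemma mps_eqI: "(\<And>m. cf f m = cf g m) \<Longrightarrow> f = g"
  by (metis cf_inject ext)

instantiation mps :: (comm_ring_1) comm_ring_1
begin
definition zero_mps_def: "0 = mk (\<lambda>_. 0)"
definition one_mps_def: "1 = mk ps_one"
definition plus_mps_def: "f + g = mk (\<lambda>m. cf f m + cf g m)"
definition minus_mps_def: "f - g = mk (\<lambda>m. cf f m - cf g m)"
definition uminus_mps_def: "- f = mk (\<lambda>m. - cf f m)"
definition times_mps_def: "f * g = mk (ps_mult (cf f) (cf g))"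
instance
proof
  fix a b c :: "'a mps"
  show "a * b * c = a * (b * c)" by (simp add: times_mps_def ps_mult_assoc)
  show "a * b = b * a" by (simp add: times_mps_def ps_mult_comm)
  show "1 * a = a" by (simp add: times_mps_def one_mps_def ps_mult_one cf_inverse)
  show "(a + b) * c = a * c + b * c" by (simp add: times_mps_def plus_mps_def ps_mult_distrib)
  show "a + b + c = a + (b + c)" by (simp add: plus_mps_def add.assoc)
  show "a + b = b + a" by (simp add: plus_mps_def add.commute)
  show "0 + a = a" by (simp add: plus_mps_def zero_mps_def cf_inverse)
  show "- a + a = 0" by (simp add: plus_mps_def zero_mps_def uminus_mps_def)
  show "a - b = a + - b" by (simp add: plus_mps_def minus_mps_def uminus_mps_def)
  show "(0::'a mps) \<noteq> 1"
  proof
    assume "(0::'a mps) = 1"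
    then have "cf (0::'a mps) 0 = cf 1 0" by simp
    then show False by (simp add: zero_mps_def one_mps_def ps_one_def ps_monom_def)
  qed
qed
end

lemma cf_add [simp]: "cf (f + g) m = cf f m + cf g m" by (simp add: plus_mps_def)
lemma cf_diff [simp]: "cf (f - g) m = cf f m - cf g m" by (simp add: minus_mps_def)
lemma cf_uminus [simp]: "cf (- f) m = - cf f m" by (simp add: uminus_mps_def)
lemma cf_zero [simp]: "cf 0 m = 0" by (simp add: zero_mps_def)
lemma cf_mult: "cf (f * g) m = (\<Sum>p\<in>{p. fst p + snd p = m}. cf f (fst p) * cf g (snd p))"
  by (simp add: times_mps_def ps_mult_def)
lemma cf_sum: "cf (sum f I) m = (\<Sum>i\<in>I. cf (f i) m)"
  by (induction I rule: infinite_finite_induct) auto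



definition e0 :: "nat \<Rightarrow>\<^sub>0 nat" where "e0 = sng 0 1"
definition ydeg :: "(nat \<Rightarrow>\<^sub>0 nat) \<Rightarrow> nat" where "ydeg m = (\<Sum>i\<in>ks m - {0}. lk m i)"

lemma mdeg_add: "mdeg (p + q) = mdeg p + mdeg q"
  unfolding mdeg_def by (rule setsum_keys_plus_distrib) auto

lemma mdeg_ydeg: "mdeg m = lk m 0 + ydeg m"
proof (cases "0 \<in> ks m")
  case True
  then show ?thesis unfolding mdeg_def ydeg_def by (simp add: sum.remove)
next
  case False
  then show ?thesis unfolding mdeg_def ydeg_def by (simp add: in_keys_iff)
qed

lemma ydeg_add: "ydeg (p + q) = ydeg p + ydeg q"
  using mdeg_add[of p q] mdeg_ydeg[of p] mdeg_ydeg[of q] mdeg_ydeg[of "p+q"]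
  by (simp add: lookup_add)

lemma lk0_add: "lk (p + q) 0 = lk p 0 + lk q 0"
  by (simp add: lookup_add)

lemma ydeg_zero_iff: "ydeg m = 0 \<longleftrightarrow> m = sng 0 (lk m 0)"
proof
  assume "ydeg m = 0"
  then have "\<forall>i\<in>ks m - {0}. lk m i = 0" unfolding ydeg_def by simp
  then have "\<And>i. i \<noteq> 0 \<Longrightarrow> lk m i = 0" by (auto simp: in_keys_iff)
  then show "m = sng 0 (lk m 0)"
    by (intro poly_mapping_eqI) (auto simp: lookup_single when_def)
next
  assume "m = sng 0 (lk m 0)"
  then have "ks m \<subseteq> {0}" by (metis empty_subsetI insert_subset keys_single order_refl singletonI)
  then have "ks m - {0} = {}" by auto
  then show "ydeg m = 0" unfolding ydeg_def by (metis sum.empty)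
qed

lemma ydeg_single0 [simp]: "ydeg (sng 0 k) = 0"
  unfolding ydeg_def by auto

lemma lk_e0 [simp]: "lk e0 0 = 1" "ydeg e0 = 0"
  by (auto simp: e0_def)

lemma mdeg_zero [simp]: "mdeg 0 = 0" by (simp add: mdeg_def)

lemma mdeg_single [simp]: "mdeg (sng i k) = k" by (simp add: mdeg_def)

lemma keys_add_nat: "ks (p + q) = ks p \<union> ks q"
  by (auto simp: in_keys_iff lookup_add)

definition sup_in :: "(nat \<Rightarrow>\<^sub>0 nat) set \<Rightarrow> 'a::comm_ring_1 mps \<Rightarrow> bool" where
  "sup_in S f \<longleftrightarrow> (\<forall>m. cf f m \<noteq> 0 \<longrightarrow> m \<in> S)"

lemma sup_inD: "sup_in S f \<Longrightarrow> m \<notin> S \<Longrightarrow> cf f m = 0"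
  by (auto simp: sup_in_def)

lemma sup_mult:
  assumes "sup_in A f" "sup_in B g" "\<And>p q. p \<in> A \<Longrightarrow> q \<in> B \<Longrightarrow> p + q \<in> C"
  shows "sup_in C (f * g)"
  unfolding sup_in_def
proof (intro allI impI)
  fix m assume "cf (f * g) m \<noteq> 0"
  then obtain p where p1: "p \<in> {p. fst p + snd p = m}" and p2: "cf f (fst p) * cf g (snd p) \<noteq> 0"
    unfolding cf_mult by (rule sum.not_neutral_contains_not_neutral)
  from p2 have "cf f (fst p) \<noteq> 0" "cf g (snd p) \<noteq> 0" by auto
  then have "fst p \<in> A" "snd p \<in> B" using assms(1,2) unfolding sup_in_def by blast+
  then have "fst p + snd p \<in> C" using assms(3) by blast
  then show "m \<in> C" using p1 by simp
qed

lemma sup_zero [simp]: "sup_in A 0"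
  by (simp add: sup_in_def)

lemma sup_add: assumes "sup_in A f" "sup_in A g" shows "sup_in A (f + g)"
  unfolding sup_in_def
proof (intro allI impI)
  fix m assume *: "cf (f + g) m \<noteq> 0"
  show "m \<in> A"
  proof (rule ccontr)
    assume "m \<notin> A"
    then have "cf f m = 0" "cf g m = 0" using assms sup_inD by auto
    then show False using * by simp
  qed
qed

lemma sup_uminus: assumes "sup_in A f" shows "sup_in A (- f)"
  using assms by (simp add: sup_in_def)

lemma sup_diff: assumes "sup_in A f" "sup_in A g" shows "sup_in A (f - g)"
  using sup_add[OF assms(1) sup_uminus[OF assms(2)]] by simp

lemma sup_mono: "sup_in A f \<Longrightarrow> A \<subseteq> B \<Longrightarrow> sup_in B f"
  by (auto simp: sup_in_def)
lemma sup_Int: "sup_in A f \<Longrightarrow> sup_in B f \<Longrightarrow> sup_in (A \<inter> B) f"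
  by (auto simp: sup_in_def)
lemma sup_UNIV: "sup_in UNIV f"
  by (auto simp: sup_in_def)
lemma sup_sum: "(\<And>i. i \<in> I \<Longrightarrow> sup_in A (f i)) \<Longrightarrow> sup_in A (sum f I)"
  by (induction I rule: infinite_finite_induct) (auto intro: sup_add)

definition mon :: "(nat \<Rightarrow>\<^sub>0 nat) \<Rightarrow> 'a::comm_ring_1 mps" where "mon \<mu> = mk (ps_monom \<mu>)"

lemma cf_mon: "cf (mon \<mu>) m = (if m = \<mu> then 1 else 0)"
  by (simp add: mon_def ps_monom_def)

lemma sup_mon: "sup_in {\<mu>} (mon \<mu>)"
  by (simp add: sup_in_def cf_mon)

lemma cf_mon_mult: "cf (mon \<mu> * f) m = (if \<exists>r. m = \<mu> + r then cf f (m - \<mu>) else 0)"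
proof (cases "\<exists>r. m = \<mu> + r")
  case True
  then obtain r where r: "m = \<mu> + r" by blast
  have "cf (mon \<mu> * f) m = (\<Sum>p\<in>{p. fst p + snd p = m}. if p = (\<mu>, r) then cf f r else 0)"
    unfolding cf_mult cf_mon
  proof (rule sum.cong[OF refl])
    fix p :: "(nat \<Rightarrow>\<^sub>0 nat) \<times> (nat \<Rightarrow>\<^sub>0 nat)"
    assume "p \<in> {p. fst p + snd p = m}"
    then have pm: "fst p + snd p = \<mu> + r" using r by simp
    show "(if fst p = \<mu> then 1 else 0) * cf f (snd p) = (if p = (\<mu>, r) then cf f r else 0)"
    proof (cases "fst p = \<mu>")
      case True
      then have "snd p = r" using pm by simp
      then show ?thesis using True by (simp add: prod_eq_iff)
    next
      case False
      then show ?thesis by auto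
    qed
  qed
  also have "\<dots> = cf f r" using r by (simp add: finite_pairs)
  finally show ?thesis using True r by simp
next
  case False
  have "cf (mon \<mu> * f) m = 0"
    unfolding cf_mult cf_mon
  proof (rule sum.neutral, rule ballI)
    fix p :: "(nat \<Rightarrow>\<^sub>0 nat) \<times> (nat \<Rightarrow>\<^sub>0 nat)"
    assume "p \<in> {p. fst p + snd p = m}"
    then have "fst p \<noteq> \<mu>" using False by auto
    then show "(if fst p = \<mu> then 1 else 0) * cf f (snd p) = 0" by simp
  qed
  with False show ?thesis by simp
qed



definition dv :: "'a::comm_ring_1 mps \<Rightarrow> 'a mps" where "dv f = mk (\<lambda>m. cf f (m + e0))"
definition Pj :: "nat \<Rightarrow> 'a::comm_ring_1 mps \<Rightarrow> 'a mps" where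
  "Pj j f = mk (\<lambda>m. if ydeg m = j then cf f m else 0)"
definition hv :: "'a::field mps \<Rightarrow> 'a mps" where "hv f = mk (\<lambda>m. cf f m / 2)"

lemma cf_dv: "cf (dv f) m = cf f (m + e0)" by (simp add: dv_def)
lemma cf_Pj: "cf (Pj j f) m = (if ydeg m = j then cf f m else 0)" by (simp add: Pj_def)
lemma cf_hv: "cf (hv f) m = cf f m / 2" by (simp add: hv_def)

lemma sup_dv: "sup_in S f \<Longrightarrow> sup_in {m. m + e0 \<in> S} (dv f)"
  by (simp add: sup_in_def cf_dv)

lemma sup_Pj: "sup_in S f \<Longrightarrow> sup_in (S \<inter> {m. ydeg m = j}) (Pj j f)"
  by (simp add: sup_in_def cf_Pj)

lemma sup_hv: "sup_in S f \<Longrightarrow> sup_in S (hv f)"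
  by (simp add: sup_in_def cf_hv)

lemma lk_e0_gen: "lk e0 i = (if i = 0 then 1 else 0)"
  by (simp add: e0_def lookup_single when_def)

lemma e0_split: "1 \<le> lk m 0 \<Longrightarrow> e0 + (m - e0) = m"
  by (rule poly_mapping_eqI) (simp add: lookup_add lookup_minus lk_e0_gen)

lemma x_dv:
  assumes "sup_in {m. 1 \<le> lk m 0} f"
  shows "mon e0 * dv f = f"
proof (rule mps_eqI)
  fix m
  show "cf (mon e0 * dv f) m = cf f m"
  proof (cases "1 \<le> lk m 0")
    case True
    then have "m = e0 + (m - e0)" using e0_split by simp
    then have "\<exists>r. m = e0 + r" by blast
    moreover have "m - e0 + e0 = m" using e0_split[OF True] by (simp add: add.commute)
    ultimately show ?thesis by (simp add: cf_mon_mult cf_dv)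
  next
    case False
    then have "\<not> (\<exists>r. m = e0 + r)" by (auto simp: lookup_add)
    moreover have "cf f m = 0" using assms False unfolding sup_in_def by blast
    ultimately show ?thesis by (simp add: cf_mon_mult)
  qed
qed

lemma Pj_mult0:
  assumes "sup_in {m. ydeg m = 0} g"
  shows "Pj j (f * g) = Pj j f * g"
proof (rule mps_eqI)
  fix m
  have "cf (Pj j (f * g)) m = (\<Sum>p\<in>{p. fst p + snd p = m}. if ydeg m = j then cf f (fst p) * cf g (snd p) else 0)"
    by (cases "ydeg m = j") (simp_all add: cf_Pj cf_mult)
  also have "\<dots> = (\<Sum>p\<in>{p. fst p + snd p = m}. cf (Pj j f) (fst p) * cf g (snd p))"
  proof (rule sum.cong[OF refl])
    fix p :: "(nat \<Rightarrow>\<^sub>0 nat) \<times> (nat \<Rightarrow>\<^sub>0 nat)"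
    assume "p \<in> {p. fst p + snd p = m}"
    then have pm: "fst p + snd p = m" by simp
    show "(if ydeg m = j then cf f (fst p) * cf g (snd p) else 0) = cf (Pj j f) (fst p) * cf g (snd p)"
    proof (cases "cf g (snd p) = 0")
      case True then show ?thesis by simp
    next
      case False
      then have "ydeg (snd p) = 0" using assms by (auto simp: sup_in_def)
      then have "ydeg m = ydeg (fst p)" using pm ydeg_add[of "fst p" "snd p"] by simp
      then show ?thesis by (simp add: cf_Pj)
    qed
  qed
  also have "\<dots> = cf (Pj j f * g) m" by (simp add: cf_mult)
  finally show "cf (Pj j (f * g)) m = cf (Pj j f * g) m" .
qed

lemma hv_double: assumes "(2::'a::field) \<noteq> 0" shows "hv f + hv f = (f::'a mps)"
proof (rule mps_eqI)
  fix m
  have "cf f m / 2 + cf f m / 2 = (cf f m + cf f m) / 2" by (rule add_divide_distrib[symmetric])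
  also have "\<dots> = (2 * cf f m) / 2" by (simp only: mult_2)
  also have "\<dots> = cf f m" using assms by simp
  finally show "cf (hv f + hv f) m = cf f m" by (simp only: cf_add cf_hv)
qed

definition emb :: "'a fps \<Rightarrow> 'a::comm_ring_1 mps" where
  "emb F = mk (\<lambda>m. if ydeg m = 0 then fps_nth F (lk m 0) else 0)"

lemma cf_emb: "cf (emb F) m = (if ydeg m = 0 then fps_nth F (lk m 0) else 0)"
  by (simp add: emb_def)

lemma cf_emb0: "ydeg m = 0 \<Longrightarrow> cf (emb F) m = fps_nth F (lk m 0)"
  unfolding cf_emb by (rule if_P)

lemma sup_emb: "sup_in {m. ydeg m = 0} (emb F)"
  by (simp add: sup_in_def cf_emb)

lemma ydeg0_eq: "ydeg m = 0 \<Longrightarrow> sng 0 (lk m 0) = m"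
  using ydeg_zero_iff[of m] by metis

lemma ydeg_zero_0 [simp]: "ydeg 0 = 0"
  by (simp add: ydeg_def)

lemma cf_one: "cf (1::'a::comm_ring_1 mps) m = (if m = 0 then 1 else 0)"
  by (simp add: one_mps_def ps_one_def ps_monom_def)

lemma emb_one: "emb 1 = (1::'a::comm_ring_1 mps)"
proof (rule mps_eqI)
  fix m
  have "ydeg m = 0 \<and> lk m 0 = 0 \<longleftrightarrow> m = 0"
    by (metis ydeg0_eq single_zero ydeg_zero_0 lookup_zero)
  then show "cf (emb 1) m = cf (1::'a mps) m"
    by (auto simp: cf_emb cf_one)
qed

lemma ydeg0_pair:
  assumes "ydeg m = 0" "fst p + snd p = m"
  shows "sng 0 (lk (fst p) 0) = fst p" "sng 0 (lk (snd p) 0) = snd p"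
    "lk (fst p) 0 + lk (snd p) 0 = lk m 0"
proof -
  have "ydeg (fst p) + ydeg (snd p) = 0" using assms ydeg_add by metis
  then have "ydeg (fst p) = 0" "ydeg (snd p) = 0" by simp_all
  then show "sng 0 (lk (fst p) 0) = fst p" "sng 0 (lk (snd p) 0) = snd p"
    using ydeg0_eq by blast+
  show "lk (fst p) 0 + lk (snd p) 0 = lk m 0" using assms(2) lookup_add by metis
qed

lemma emb_mult: "emb (F * G) = emb F * (emb G :: 'a::comm_ring_1 mps)"
proof (rule mps_eqI)
  fix m
  show "cf (emb (F * G)) m = cf (emb F * emb G) m"
  proof (cases "ydeg m = 0")
    case False
    have "cf (emb F * emb G) m = 0"
      unfolding cf_mult
    proof (rule sum.neutral, rule ballI)
      fix p :: "(nat \<Rightarrow>\<^sub>0 nat) \<times> (nat \<Rightarrow>\<^sub>0 nat)"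
      assume "p \<in> {p. fst p + snd p = m}"
      then have "fst p + snd p = m" by simp
      then have "ydeg (fst p) + ydeg (snd p) = ydeg m" using ydeg_add by metis
      then have "ydeg (fst p) \<noteq> 0 \<or> ydeg (snd p) \<noteq> 0" using False by linarith
      then show "cf (emb F) (fst p) * cf (emb G) (snd p) = 0" by (auto simp: cf_emb)
    qed
    then show ?thesis using False by (simp add: cf_emb)
  next
    case True
    define k where "k = lk m 0"
    have mk: "sng 0 k = m" using ydeg0_eq[OF True] k_def by simp
    have "cf (emb F * emb G) m = (\<Sum>p\<in>{p. fst p + snd p = m}. cf (emb F) (fst p) * cf (emb G) (snd p))"
      by (simp add: cf_mult)
    also have "\<dots> = (\<Sum>t\<in>{0..k}. fps_nth F t * fps_nth G (k - t))"
    proof (rule sum.reindex_bij_witness[where j = "\<lambda>p. lk (fst p) 0" and i = "\<lambda>t. (sng 0 t, sng 0 (k - t))"])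
      fix p :: "(nat \<Rightarrow>\<^sub>0 nat) \<times> (nat \<Rightarrow>\<^sub>0 nat)"
      assume "p \<in> {p. fst p + snd p = m}"
      then have pm: "fst p + snd p = m" by simp
      define a where "a = lk (fst p) 0"
      define b where "b = lk (snd p) 0"
      have fa: "sng 0 a = fst p" unfolding a_def using ydeg0_pair(1)[OF True pm] .
      have fb: "sng 0 b = snd p" unfolding b_def using ydeg0_pair(2)[OF True pm] .
      have ab: "a + b = k" unfolding a_def b_def k_def using ydeg0_pair(3)[OF True pm] .
      have kab: "k - a = b" using ab by simp
      show "(sng 0 (lk (fst p) 0), sng 0 (k - lk (fst p) 0)) = p"
        unfolding a_def[symmetric] kab using fa fb by (simp add: prod_eq_iff)
      show "lk (fst p) 0 \<in> {0..k}" unfolding a_def[symmetric] using ab by simp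
      have e1: "cf (emb F) (fst p) = fps_nth F a" unfolding fa[symmetric] by (simp add: cf_emb)
      have e2: "cf (emb G) (snd p) = fps_nth G b" unfolding fb[symmetric] by (simp add: cf_emb)
      show "fps_nth F (lk (fst p) 0) * fps_nth G (k - lk (fst p) 0) = cf (emb F) (fst p) * cf (emb G) (snd p)"
        unfolding a_def[symmetric] kab e1 e2 ..
    next
      fix t assume t: "t \<in> {0..k}"
      show "lk (fst (sng 0 t, sng 0 (k - t))) 0 = t" by simp
      have "sng 0 t + sng 0 (k - t) = sng 0 k" using t by (simp add: single_add[symmetric])
      then show "(sng 0 t, sng 0 (k - t)) \<in> {p. fst p + snd p = m}" using mk by simp
    qed
    also have "\<dots> = cf (emb (F * G)) m" using True by (simp add: cf_emb fps_mult_nth k_def)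
    finally show ?thesis by simp
  qed
qed

lemma emb_of:
  assumes "sup_in {m. ydeg m = 0} f"
  shows "f = emb (Abs_fps (\<lambda>n. cf f (sng 0 n)))"
proof (rule mps_eqI)
  fix m
  show "cf f m = cf (emb (Abs_fps (\<lambda>n. cf f (sng 0 n)))) m"
  proof (cases "ydeg m = 0")
    case True
    have "cf (emb (Abs_fps (\<lambda>n. cf f (sng 0 n)))) m = fps_nth (Abs_fps (\<lambda>n. cf f (sng 0 n))) (lk m 0)"
      using True by (rule cf_emb0)
    also have "\<dots> = cf f (sng 0 (lk m 0))" by (simp only: fps_nth_Abs_fps)
    also have "\<dots> = cf f m" by (simp only: ydeg0_eq[OF True])
    finally show ?thesis by (rule sym)
  next
    case False
    have f0: "cf f m = 0" by (rule sup_inD[OF assms]) (use False in simp)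
    have "cf (emb (Abs_fps (\<lambda>n. cf f (sng 0 n)))) m = 0"
      unfolding cf_emb using False by (rule if_not_P)
    then show ?thesis using f0 by (rule ssubst)
  qed
qed

lemma inv_exists:
  fixes u :: "'a::field mps"
  assumes "sup_in {m. ydeg m = 0} u" "cf u 0 \<noteq> 0"
  shows "\<exists>w. sup_in {m. ydeg m = 0} w \<and> u * w = 1"
proof -
  define U where "U = Abs_fps (\<lambda>n. cf u (sng 0 n))"
  have u: "u = emb U" using emb_of[OF assms(1)] U_def by simp
  have "fps_nth U 0 \<noteq> 0" using assms(2) by (simp add: U_def)
  then have "U * inverse U = 1" by (rule inverse_mult_eq_1')
  then have "u * emb (inverse U) = 1" using u emb_mult emb_one by metis
  then show ?thesis using sup_emb by blast
qed



lemma ps_mult_cf: "ps_mult a b = cf (mk a * mk b)" by (simp add: times_mps_def)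
lemma ps_add_cf: "ps_add a b = cf (mk a + mk b)" by (rule ext) (simp add: ps_add_def)
lemma ps_sum_cf: "ps_sum h I = cf (\<Sum>i\<in>I. mk (h i))" by (rule ext) (simp add: ps_sum_def cf_sum)
lemma ps_var_cf: "ps_var i = cf (mon (sng i 1))" by (simp add: ps_var_def mon_def)
lemma ps_in_sup: "ps_in d (cf f) \<longleftrightarrow> sup_in {m. ks m \<subseteq> {0..d}} f"
  by (simp add: ps_in_def sup_in_def)

lemma lk_le_mdeg: "lk \<mu> i \<le> mdeg \<mu>"
proof (cases "i \<in> ks \<mu>")
  case True
  then show ?thesis unfolding mdeg_def by (simp add: member_le_sum)
next
  case False
  then show ?thesis by (simp add: in_keys_iff)
qed

lemma finite_mons: assumes "finite I" shows "finite {\<mu>. ks \<mu> \<subseteq> I \<and> mdeg \<mu> = n}"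
proof -
  let ?S = "{\<mu>. ks \<mu> \<subseteq> I \<and> mdeg \<mu> = n}"
  have "inj_on (\<lambda>\<mu>. restrict (lk \<mu>) I) ?S"
  proof (rule inj_onI)
    fix a b assume a: "a \<in> ?S" and b: "b \<in> ?S" and eq: "restrict (lk a) I = restrict (lk b) I"
    show "a = b"
    proof (rule poly_mapping_eqI)
      fix i
      show "lk a i = lk b i"
      proof (cases "i \<in> I")
        case True
        from eq have "restrict (lk a) I i = restrict (lk b) I i" by simp
        with True show ?thesis by simp
      next
        case False
        then have "i \<notin> ks a" "i \<notin> ks b" using a b by auto
        then show ?thesis by (simp add: in_keys_iff)
      qed
    qed
  qed
  moreover have "(\<lambda>\<mu>. restrict (lk \<mu>) I) ` ?S \<subseteq> PiE I (\<lambda>_. {..n})"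
    using lk_le_mdeg by fastforce
  moreover have "finite (PiE I (\<lambda>_. {..n}))" using assms by (rule finite_PiE) auto
  ultimately show ?thesis by (meson finite_imageD finite_subset)
qed

lemma keys_sub_add: "ks r \<subseteq> ks (\<mu> + r)"
  by (simp add: keys_add_nat)

lemma ydeg_nokey0: "0 \<notin> ks \<mu> \<Longrightarrow> ydeg \<mu> = mdeg \<mu>"
  using mdeg_ydeg[of \<mu>] by (simp add: in_keys_iff)

lemma ex_sel:
  assumes "n \<le> ydeg m"
  shows "\<exists>\<mu> r. m = \<mu> + r \<and> ks \<mu> \<subseteq> ks m - {0} \<and> mdeg \<mu> = n"
  using assms
proof (induction n)
  case 0
  show ?case by (rule exI[of _ 0], rule exI[of _ m]) simp
next
  case (Suc n)
  then obtain \<mu> r where mr: "m = \<mu> + r" and k: "ks \<mu> \<subseteq> ks m - {0}" and md: "mdeg \<mu> = n" by auto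
  have "ydeg \<mu> = n" using k md ydeg_nokey0 by auto
  then have "ydeg r \<ge> 1" using Suc.prems mr ydeg_add by fastforce
  then have "ks r - {0} \<noteq> {}" unfolding ydeg_def by (metis less_one not_le sum.empty)
  then obtain i where i: "i \<in> ks r" "i \<noteq> 0" by auto
  then have ri: "1 \<le> lk r i" by (simp add: in_keys_iff)
  define \<mu>' where "\<mu>' = \<mu> + sng i 1"
  define r' where "r' = r - sng i 1"
  have "m = \<mu>' + r'"
    unfolding mr \<mu>'_def r'_def
    by (rule poly_mapping_eqI) (use ri in \<open>auto simp: lookup_add lookup_minus lookup_single when_def\<close>)
  moreover have "ks \<mu>' \<subseteq> ks m - {0}"
    using k i mr keys_sub_add[of r \<mu>] unfolding \<mu>'_def by (auto simp: keys_add_nat)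
  moreover have "mdeg \<mu>' = Suc n" unfolding \<mu>'_def by (simp add: mdeg_add md)
  ultimately show ?case by blast
qed

lemma ideal_sup:
  assumes "ps_in_ideal_pow d S n G"
  shows "sup_in {m. n \<le> mdeg m} (mk G :: 'a::comm_ring_1 mps)"
proof -
  from assms obtain h where G: "G = ps_sum (\<lambda>\<mu>. ps_mult (ps_monom \<mu>) (h \<mu>)) {\<mu>. ks \<mu> \<subseteq> S \<and> mdeg \<mu> = n}"
    unfolding ps_in_ideal_pow_def by blast
  have "mk G = (\<Sum>\<mu>\<in>{\<mu>. ks \<mu> \<subseteq> S \<and> mdeg \<mu> = n}. mon \<mu> * (mk (h \<mu>) :: 'a mps))"
    unfolding G ps_sum_cf ps_mult_cf by (simp add: cf_inverse mon_def)
  also have "sup_in {m. n \<le> mdeg m} \<dots>"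
  proof (rule sup_sum)
    fix \<mu> assume "\<mu> \<in> {\<mu>. ks \<mu> \<subseteq> S \<and> mdeg \<mu> = n}"
    then have "mdeg \<mu> = n" by simp
    then show "sup_in {m. n \<le> mdeg m} (mon \<mu> * (mk (h \<mu>) :: 'a mps))"
      by (intro sup_mult[OF sup_mon sup_UNIV]) (auto simp: mdeg_add)
  qed
  finally show ?thesis .
qed

lemma sup_ideal:
  fixes f :: "'a::comm_ring_1 mps"
  assumes hi: "sup_in {m. n \<le> ydeg m} f" and K: "sup_in {m. ks m \<subseteq> {0..d}} f"
  shows "ps_in_ideal_pow d {1..d} n (cf f)"
proof -
  define valid where "valid m \<longleftrightarrow> n \<le> ydeg m \<and> ks m \<subseteq> {0..d}" for m
  define Sm where "Sm = {\<mu>. ks \<mu> \<subseteq> {1..d} \<and> mdeg \<mu> = n}"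
  define sel where "sel m = (SOME \<mu>. (\<exists>r. m = \<mu> + r) \<and> \<mu> \<in> Sm)" for m
  have sel: "(\<exists>r. m = sel m + r) \<and> sel m \<in> Sm" if "valid m" for m
  proof -
    from that ex_sel[of n m] obtain \<mu> r where mr: "m = \<mu> + r" and k: "ks \<mu> \<subseteq> ks m - {0}" and md: "mdeg \<mu> = n"
      unfolding valid_def by blast
    have km: "ks m \<subseteq> {0..d}" using that valid_def by simp
    have "ks \<mu> \<subseteq> {0..d} - {0}" using k km by blast
    moreover have "{0..d} - {0} = {1..(d::nat)}" by auto
    ultimately have "ks \<mu> \<subseteq> {1..d}" by simp
    then have "(\<exists>r. m = \<mu> + r) \<and> \<mu> \<in> Sm" unfolding Sm_def using mr md by blast
    then show ?thesis unfolding sel_def by (rule someI)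
  qed
  define h where "h \<mu> = (\<lambda>r. if valid (\<mu> + r) \<and> sel (\<mu> + r) = \<mu> then cf f (\<mu> + r) else 0)" for \<mu>
  have hin: "ps_in d (h \<mu>)" for \<mu>
    unfolding ps_in_def
  proof (intro allI impI)
    fix r assume "h \<mu> r \<noteq> 0"
    then have "ks (\<mu> + r) \<subseteq> {0..d}" unfolding h_def valid_def by (metis (no_types, lifting))
    then show "ks r \<subseteq> {0..d}" using keys_sub_add[of r \<mu>] by blast
  qed
  have fin: "finite Sm" unfolding Sm_def by (rule finite_mons) simp
  have "cf f = ps_sum (\<lambda>\<mu>. ps_mult (ps_monom \<mu>) (h \<mu>)) Sm"
  proof (rule ext)
    fix m
    have "ps_sum (\<lambda>\<mu>. ps_mult (ps_monom \<mu>) (h \<mu>)) Sm m = (\<Sum>\<mu>\<in>Sm. cf (mon \<mu> * mk (h \<mu>)) m)"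
      by (simp add: ps_sum_def ps_mult_cf mon_def)
    also have "\<dots> = (\<Sum>\<mu>\<in>Sm. if \<mu> = sel m \<and> valid m then cf f m else 0)"
    proof (rule sum.cong[OF refl])
      fix \<mu> assume "\<mu> \<in> Sm"
      show "cf (mon \<mu> * mk (h \<mu>)) m = (if \<mu> = sel m \<and> valid m then cf f m else 0)"
      proof (cases "\<exists>r. m = \<mu> + r")
        case True
        then obtain r where r: "m = \<mu> + r" by blast
        then have "m - \<mu> = r" by simp
        then show ?thesis using r by (auto simp: cf_mon_mult h_def)
      next
        case False
        have "\<not> (\<mu> = sel m \<and> valid m)" using sel False by blast
        then have "(if \<mu> = sel m \<and> valid m then cf f m else 0) = 0" by (rule if_not_P)
        then show ?thesis using False by (simp add: cf_mon_mult)
      qed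
    qed
    also have "\<dots> = cf f m"
    proof (cases "valid m")
      case True
      then show ?thesis using sel[OF True] fin by simp
    next
      case False
      then have "cf f m = 0" using hi K unfolding sup_in_def valid_def by blast
      then show ?thesis using False by simp
    qed
    finally show "cf f m = ps_sum (\<lambda>\<mu>. ps_mult (ps_monom \<mu>) (h \<mu>)) Sm m" by simp
  qed
  then show ?thesis unfolding ps_in_ideal_pow_def Sm_def using hin by blast
qed



lemma e0_facts [simp]: "mdeg e0 = 1" "ks e0 = {0}"
  by (simp_all add: e0_def)

lemma Pj_rest: "sup_in {m. 3 \<le> ydeg m} (f - (Pj 0 f + Pj 1 f + Pj 2 f))"
  unfolding sup_in_def
proof (intro allI impI)
  fix m assume nz: "cf (f - (Pj 0 f + Pj 1 f + Pj 2 f)) m \<noteq> 0"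
  show "m \<in> {m. 3 \<le> ydeg m}"
  proof (rule ccontr)
    assume "m \<notin> {m. 3 \<le> ydeg m}"
    then have "ydeg m = 0 \<or> ydeg m = 1 \<or> ydeg m = 2" by auto
    then have "cf (f - (Pj 0 f + Pj 1 f + Pj 2 f)) m = 0" by (auto simp: cf_Pj)
    with nz show False by simp
  qed
qed

lemma K_add: "p \<in> {m. ks m \<subseteq> {0..d}} \<Longrightarrow> q \<in> {m. ks m \<subseteq> {0..d}} \<Longrightarrow> p + q \<in> {m. ks m \<subseteq> {0..d}}"
  by (simp add: keys_add_nat)

lemma sup_K_mult: "sup_in {m. ks m \<subseteq> {0..d}} f \<Longrightarrow> sup_in {m. ks m \<subseteq> {0..d}} g \<Longrightarrow> sup_in {m. ks m \<subseteq> {0..d}} (f * g)"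
  by (rule sup_mult) (auto simp: keys_add_nat)

lemma sup_K_dv: "sup_in {m. ks m \<subseteq> {0..d}} f \<Longrightarrow> sup_in {m. ks m \<subseteq> {0..d}} (dv f)"
proof -
  assume "sup_in {m. ks m \<subseteq> {0..d}} f"
  then have "sup_in {m. m + e0 \<in> {m. ks m \<subseteq> {0..d}}} (dv f)" by (rule sup_dv)
  then show ?thesis by (rule sup_mono) (auto simp: keys_add_nat)
qed

lemma sup_K_Pj: "sup_in {m. ks m \<subseteq> {0..d}} f \<Longrightarrow> sup_in {m. ks m \<subseteq> {0..d}} (Pj j f)"
  by (drule sup_Pj) (erule sup_mono, blast)

lemma ydeg0_K: "sup_in {m. ydeg m = 0} f \<Longrightarrow> sup_in {m. ks m \<subseteq> {0..d}} f"
proof (erule sup_mono, rule subsetI)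
  fix m assume "m \<in> {m. ydeg m = 0}"
  then have "sng 0 (lk m 0) = m" using ydeg0_eq by simp
  then have "ks m \<subseteq> {0}" by (metis empty_subsetI insert_subset keys_single order_refl singletonI)
  then show "m \<in> {m. ks m \<subseteq> {0..d}}" by auto
qed

lemma e0_add_facts: "lk (m + e0) 0 = lk m 0 + 1" "ydeg (m + e0) = ydeg m"
  by (simp_all add: lookup_add ydeg_add)

lemma mdeg_split: "mdeg m = lk m 0 + ydeg m" by (rule mdeg_ydeg)

theorem lemma3p1:
  fixes d :: nat and F G :: "'a::field pser"
  assumes half: "(2::'a) \<noteq> 0"
    and G_in: "ps_in d G"
    and G_m3: "ps_in_ideal_pow d {0..d} 3 G"
    and F_def: "F = ps_add (ps_sum (\<lambda>i. ps_mult (ps_var i) (ps_var i)) {0..d}) G"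
  shows "\<exists>v0 a0 G1.
           ps_in d v0 \<and> ps_unit d v0 \<and>
           ps_in d a0 \<and> ps_in_ideal_pow d {1..d} 1 a0 \<and>
           ps_in d G1 \<and> ps_in_ideal_pow d {1..d} 3 G1 \<and>
           F = ps_add (ps_add (ps_mult v0 (ps_mult (ps_add (ps_var 0) a0) (ps_add (ps_var 0) a0)))
                              (ps_sum (\<lambda>i. ps_mult (ps_var i) (ps_var i)) {1..d}))
                      G1"
proof -
  define K where "K = {m::nat \<Rightarrow>\<^sub>0 nat. ks m \<subseteq> {0..d}}"
  define x :: "'a mps" where "x = mon e0"
  define Gm :: "'a mps" where "Gm = mk G"
  define Y2 :: "'a mps" where "Y2 = (\<Sum>i\<in>{1..d}. mon (sng i 1) * mon (sng i 1))"
  define T where "T = x * x + Gm"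
  have Fm: "mk F = T + Y2"
  proof -
    have "mk F = (\<Sum>i\<in>{0..d}. mon (sng i 1) * mon (sng i 1)) + Gm"
      unfolding F_def Gm_def by (simp add: ps_add_cf ps_sum_cf ps_mult_cf ps_var_cf cf_inverse)
    also have "{0..d} = insert 0 {1..d}" by auto
    also have "(\<Sum>i\<in>insert 0 {1..d}. mon (sng i 1) * mon (sng i 1)) = x * x + (Y2 :: 'a mps)"
      by (simp add: Y2_def x_def e0_def)
    finally show ?thesis by (simp add: T_def algebra_simps)
  qed
  have GK: "sup_in K Gm"
  proof -
    have "ps_in d (cf Gm)" using G_in by (simp add: Gm_def)
    then show ?thesis unfolding K_def by (simp only: ps_in_sup)
  qed
  have G3: "sup_in {m. 3 \<le> mdeg m} Gm" unfolding Gm_def by (rule ideal_sup[OF G_m3])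
  have xs: "sup_in {e0} x" unfolding x_def by (rule sup_mon)
  have xxs: "sup_in {e0 + e0} (x * x)" by (rule sup_mult[OF xs xs]) simp
  have e0K: "e0 \<in> K" unfolding K_def by simp
  have xK: "sup_in K x" by (rule sup_mono[OF xs]) (simp add: e0K)
  define S0 where "S0 = {m. m = e0 + e0 \<or> 3 \<le> mdeg m}"
  have Ts: "sup_in S0 T" unfolding T_def
    by (rule sup_add; rule sup_mono[OF xxs] sup_mono[OF G3]) (auto simp: S0_def)
  have TK: "sup_in K T" unfolding T_def using sup_K_mult[OF xK[unfolded K_def] xK[unfolded K_def]] GK
    unfolding K_def by (rule sup_add)
  define P0T where "P0T = Pj 0 T"
  have P0Ts: "sup_in {m. 2 \<le> lk m 0 \<and> ydeg m = 0} P0T"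
  proof -
    have S: "sup_in (S0 \<inter> {m. ydeg m = 0}) P0T" unfolding P0T_def by (rule sup_Pj[OF Ts])
    show ?thesis
    proof (rule sup_mono[OF S], rule subsetI)
      fix m assume m: "m \<in> S0 \<inter> {m. ydeg m = 0}"
      then have y0: "ydeg m = 0" by simp
      from m have "m = e0 + e0 \<or> 3 \<le> mdeg m" by (simp add: S0_def)
      then have "2 \<le> lk m 0"
      proof
        assume "m = e0 + e0" then show ?thesis by (simp add: lookup_add)
      next
        assume "3 \<le> mdeg m" then show ?thesis using mdeg_split[of m] y0 by simp
      qed
      then show "m \<in> {m. 2 \<le> lk m 0 \<and> ydeg m = 0}" using y0 by simp
    qed
  qed
  define d1 where "d1 = dv P0T"
  have d1s: "sup_in {m. 1 \<le> lk m 0 \<and> ydeg m = 0} d1"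
    unfolding d1_def using sup_dv[OF P0Ts] by (rule sup_mono) (auto simp: e0_add_facts)
  have xd1: "x * d1 = P0T" unfolding x_def d1_def
    by (rule x_dv) (rule sup_mono[OF P0Ts], auto)
  define u where "u = dv d1"
  have us: "sup_in {m. ydeg m = 0} u"
    unfolding u_def using sup_dv[OF d1s] by (rule sup_mono) (auto simp: e0_add_facts)
  have xu: "x * u = d1" unfolding x_def u_def
    by (rule x_dv) (rule sup_mono[OF d1s], auto)
  have u0: "cf u 0 = 1"
  proof -
    have "cf u 0 = cf P0T (e0 + e0)" by (simp add: u_def d1_def cf_dv)
    also have "\<dots> = cf T (e0 + e0)" by (simp add: P0T_def cf_Pj ydeg_add)
    also have "\<dots> = cf (x * x) (e0 + e0) + cf Gm (e0 + e0)" by (simp add: T_def)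
    also have "cf Gm (e0 + e0) = 0" by (rule sup_inD[OF G3]) (simp add: mdeg_add)
    also have "cf (x * x) (e0 + e0) = 1"
    proof -
      have "cf (x * x) (e0 + e0) = cf x (e0 + e0 - e0)" unfolding x_def cf_mon_mult by auto
      also have "\<dots> = 1" by (simp add: x_def cf_mon)
      finally show ?thesis .
    qed
    finally show ?thesis by simp
  qed
  obtain w where ws: "sup_in {m. ydeg m = 0} w" and uw: "u * w = 1"
    using inv_exists[OF us] u0 by auto
  have uK: "sup_in K u" unfolding K_def using us by (rule ydeg0_K)
  have wK: "sup_in K w" unfolding K_def using ws by (rule ydeg0_K)
  define H where "H = T * w"
  have Hs: "sup_in {m. ydeg m = 0 \<or> 3 \<le> mdeg m} H"
    unfolding H_def
  proof (rule sup_mult[OF Ts ws])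
    fix p q assume p: "p \<in> S0" and q: "q \<in> {m. ydeg m = 0}"
    from p have "p = e0 + e0 \<or> 3 \<le> mdeg p" by (simp add: S0_def)
    then show "p + q \<in> {m. ydeg m = 0 \<or> 3 \<le> mdeg m}"
    proof
      assume "p = e0 + e0" then show ?thesis using q by (simp add: ydeg_add)
    next
      assume "3 \<le> mdeg p" then show ?thesis by (simp add: mdeg_add)
    qed
  qed
  have HK: "sup_in K H" unfolding H_def K_def
    by (rule sup_K_mult) (use TK wK in \<open>simp_all add: K_def\<close>)
  have P0H: "Pj 0 H = x * x"
  proof -
    have "Pj 0 H = P0T * w" unfolding H_def P0T_def by (rule Pj_mult0[OF ws])
    also have "\<dots> = x * (x * u) * w" by (simp add: xd1 xu)
    also have "\<dots> = x * x * (u * w)" by (simp add: algebra_simps)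
    finally show ?thesis by (simp add: uw)
  qed
  define P1 where "P1 = Pj 1 H"
  define P2 where "P2 = Pj 2 H"
  have P1s: "sup_in {m. 2 \<le> lk m 0 \<and> ydeg m = 1} P1"
    unfolding P1_def
  proof (rule sup_mono[OF sup_Pj[OF Hs]], intro subsetI)
    fix m assume "m \<in> {m. ydeg m = 0 \<or> 3 \<le> mdeg m} \<inter> {m. ydeg m = 1}"
    then have "ydeg m = 1" "3 \<le> mdeg m" by auto
    then show "m \<in> {m. 2 \<le> lk m 0 \<and> ydeg m = 1}" using mdeg_split[of m] by simp
  qed
  have P2s: "sup_in {m. 1 \<le> lk m 0 \<and> ydeg m = 2} P2"
    unfolding P2_def
  proof (rule sup_mono[OF sup_Pj[OF Hs]], intro subsetI)
    fix m assume "m \<in> {m. ydeg m = 0 \<or> 3 \<le> mdeg m} \<inter> {m. ydeg m = 2}"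
    then have "ydeg m = 2" "3 \<le> mdeg m" by auto
    then show "m \<in> {m. 1 \<le> lk m 0 \<and> ydeg m = 2}" using mdeg_split[of m] by simp
  qed
  define A1 where "A1 = hv (dv P1)"
  have A1s: "sup_in {m. 1 \<le> lk m 0 \<and> ydeg m = 1} A1"
    unfolding A1_def using sup_hv[OF sup_dv[OF P1s]] by (rule sup_mono) (auto simp: e0_add_facts)
  have xA1: "x * (A1 + A1) = P1"
  proof -
    have "A1 + A1 = dv P1" unfolding A1_def by (rule hv_double[OF half])
    moreover have "x * dv P1 = P1" unfolding x_def by (rule x_dv) (rule sup_mono[OF P1s], auto)
    ultimately show ?thesis by simp
  qed
  have A11s: "sup_in {m. 2 \<le> lk m 0 \<and> ydeg m = 2} (A1 * A1)"
    by (rule sup_mult[OF A1s A1s]) (auto simp: lookup_add ydeg_add)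
  define Q where "Q = P2 - A1 * A1"
  have Qs: "sup_in {m. 1 \<le> lk m 0 \<and> ydeg m = 2} Q"
    unfolding Q_def by (rule sup_diff[OF P2s]) (rule sup_mono[OF A11s], auto)
  define A2 where "A2 = hv (dv Q)"
  have A2s: "sup_in {m. ydeg m = 2} A2"
    unfolding A2_def using sup_hv[OF sup_dv[OF Qs]] by (rule sup_mono) (auto simp: e0_add_facts)
  have xA2: "x * (A2 + A2) = Q"
  proof -
    have "A2 + A2 = dv Q" unfolding A2_def by (rule hv_double[OF half])
    moreover have "x * dv Q = Q" unfolding x_def by (rule x_dv) (rule sup_mono[OF Qs], auto)
    ultimately show ?thesis by simp
  qed
  define a0 where "a0 = A1 + A2"
  have a0s: "sup_in {m. 1 \<le> ydeg m} a0"
    unfolding a0_def by (rule sup_add; rule sup_mono[OF A1s] sup_mono[OF A2s]) auto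
  have P1K: "sup_in K P1" unfolding P1_def K_def by (rule sup_K_Pj) (use HK in \<open>simp add: K_def\<close>)
  have P2K: "sup_in K P2" unfolding P2_def K_def by (rule sup_K_Pj) (use HK in \<open>simp add: K_def\<close>)
  have A1K: "sup_in K A1" unfolding A1_def K_def
    by (rule sup_hv, rule sup_K_dv) (use P1K in \<open>simp add: K_def\<close>)
  have QK: "sup_in K Q" unfolding Q_def K_def
    by (rule sup_diff, use P2K in \<open>simp add: K_def\<close>, rule sup_K_mult) (use A1K in \<open>simp_all add: K_def\<close>)
  have A2K: "sup_in K A2" unfolding A2_def K_def
    by (rule sup_hv, rule sup_K_dv) (use QK in \<open>simp add: K_def\<close>)
  have a0K: "sup_in K a0" unfolding a0_def using A1K A2K by (rule sup_add)
  define R where "R = (A1 + A1) * A2 + A2 * A2"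
  have Rs: "sup_in {m. 3 \<le> ydeg m} R"
    unfolding R_def
  proof (rule sup_add)
    have "sup_in {m. 1 \<le> ydeg m} (A1 + A1)" by (rule sup_add; rule sup_mono[OF A1s]) auto
    then show "sup_in {m. 3 \<le> ydeg m} ((A1 + A1) * A2)"
      by (rule sup_mult[OF _ A2s]) (simp add: ydeg_add)
    show "sup_in {m. 3 \<le> ydeg m} (A2 * A2)"
      by (rule sup_mult[OF A2s A2s]) (simp add: ydeg_add)
  qed
  have sq: "(x + a0) * (x + a0) = Pj 0 H + P1 + P2 + R"
  proof -
    have "(x + a0) * (x + a0) = x * x + x * (A1 + A1) + x * (A2 + A2) + A1 * A1 + R"
      unfolding a0_def R_def by (simp add: algebra_simps)
    also have "\<dots> = Pj 0 H + P1 + P2 + R" unfolding xA1 xA2 P0H[symmetric] Q_def by (simp add: algebra_simps)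
    finally show ?thesis .
  qed
  have hi: "sup_in {m. 3 \<le> ydeg m} (H - (x + a0) * (x + a0))"
  proof -
    have e: "H - (x + a0) * (x + a0) = (H - (Pj 0 H + Pj 1 H + Pj 2 H)) - R"
      unfolding sq unfolding P1_def P2_def by (simp add: algebra_simps)
    show ?thesis unfolding e by (rule sup_diff[OF Pj_rest Rs])
  qed
  define G1 where "G1 = mk F - (u * ((x + a0) * (x + a0)) + Y2)"
  have G1eq: "G1 = u * (H - (x + a0) * (x + a0))"
  proof -
    have "T = u * H" using uw by (simp add: H_def algebra_simps)
    then show ?thesis by (simp add: G1_def Fm algebra_simps)
  qed
  have G1s: "sup_in {m. 3 \<le> ydeg m} G1"
    unfolding G1eq by (rule sup_mult[OF sup_UNIV hi]) (simp add: ydeg_add)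
  have G1K: "sup_in K G1"
  proof -
    have xa0K: "sup_in K (x + a0)" using xK a0K by (rule sup_add)
    have "sup_in K ((x + a0) * (x + a0))" using xa0K unfolding K_def by (intro sup_K_mult)
    then have "sup_in K (H - (x + a0) * (x + a0))" using HK by (intro sup_diff)
    then show ?thesis unfolding G1eq using uK unfolding K_def by (intro sup_K_mult)
  qed
  have Feq: "F = ps_add (ps_add (ps_mult (cf u) (ps_mult (ps_add (ps_var 0) (cf a0)) (ps_add (ps_var 0) (cf a0))))
                              (ps_sum (\<lambda>i. ps_mult (ps_var i) (ps_var i)) {1..d}))
                      (cf G1)"
  proof -
    have "ps_add (ps_add (ps_mult (cf u) (ps_mult (ps_add (ps_var 0) (cf a0)) (ps_add (ps_var 0) (cf a0))))
                              (ps_sum (\<lambda>i. ps_mult (ps_var i) (ps_var i)) {1..d}))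
                      (cf G1) = cf (u * ((x + a0) * (x + a0)) + Y2 + G1)"
      by (simp add: ps_add_cf ps_mult_cf ps_sum_cf ps_var_cf cf_inverse Y2_def x_def e0_def)
    also have "u * ((x + a0) * (x + a0)) + Y2 + G1 = mk F" by (simp add: G1_def)
    finally show ?thesis by simp
  qed
  show ?thesis
  proof (intro exI conjI)
    show "ps_in d (cf u)" using uK unfolding K_def by (simp only: ps_in_sup)
    show "ps_unit d (cf u)" unfolding ps_unit_def
    proof (intro exI conjI)
      show "ps_in d (cf w)" using wK unfolding K_def by (simp only: ps_in_sup)
      show "ps_mult (cf u) (cf w) = ps_one" using uw by (simp add: ps_mult_cf cf_inverse one_mps_def)
    qed
    show "ps_in d (cf a0)" using a0K unfolding K_def by (simp only: ps_in_sup)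
    show "ps_in_ideal_pow d {1..d} 1 (cf a0)" using a0s a0K unfolding K_def by (rule sup_ideal)
    show "ps_in d (cf G1)" using G1K unfolding K_def by (simp only: ps_in_sup)
    show "ps_in_ideal_pow d {1..d} 3 (cf G1)" using G1s G1K unfolding K_def by (rule sup_ideal)
    show "F = ps_add (ps_add (ps_mult (cf u) (ps_mult (ps_add (ps_var 0) (cf a0)) (ps_add (ps_var 0) (cf a0))))
                              (ps_sum (\<lambda>i. ps_mult (ps_var i) (ps_var i)) {1..d}))
                      (cf G1)" by (rule Feq)
  qed
qed


end
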